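(* Let $u_0\in L^2([0,1])$ and $v_0=H(u_0)$. Then $$\sup_{x\in[0,1]}|v_0(x)|\le e^{\Vert u_0\Vert_{L^2}}\quad\text{and}\quad \Vert\partial_x v_0\Vert_{L^2}\le\tfrac12 e^{\Vert u_0\Vert_{L^2}}\Vert u_0\Vert_{L^2}.$$
   Context: $H(u)(x)=\dfrac{e^{-\frac12\int_0^x u(s)ds}}{\int_0^1 e^{-\frac12\int_0^y u(s)ds}\,dy}$ for $u\in L^2([0,1])$, $x\in[0,1]$ (Cole–Hopf transform). *)

theory Defs
  imports "HOL-Analysis.Analysis"
begin

definition in_L2_01 :: "(real \<Rightarrow> real) \<Rightarrow> bool" where
  "in_L2_01 u \<longleftrightarrow> set_borel_measurable lebesgue {0..1} u
      \<and> set_integrable lebesgue {0..1} (\<lambda>x. (u x)\<^sup>2)"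

definition L2norm01 :: "(real \<Rightarrow> real) \<Rightarrow> real" where
  "L2norm01 u = sqrt (LINT x:{0..1}|lebesgue. (u x)\<^sup>2)"

definition cole_hopf :: "(real \<Rightarrow> real) \<Rightarrow> real \<Rightarrow> real" where
  "cole_hopf u x =
     exp (- (1/2) * (LINT s:{0..x}|lebesgue. u s))
     / (LINT y:{0..1}|lebesgue. exp (- (1/2) * (LINT s:{0..y}|lebesgue. u s)))"

end

theory Submission
  imports Defs "HOL-Probability.Probability_Mass_Function"
begin


lemma prod_integrable:
  fixes f g :: "real \<Rightarrow> real"
  assumes f: "integrable lborel f" and g: "integrable lborel g"
  shows "integrable (lborel \<Otimes>\<^sub>M lborel) (\<lambda>p. f (fst p) * g (snd p))"
proof -
  have [measurable]: "f \<in> borel_measurable borel" "g \<in> borel_measurable borel"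
    using f g by auto
  show ?thesis
  proof (rule lborel_pair.Fubini_integrable)
    show "(\<lambda>p. f (fst p) * g (snd p)) \<in> borel_measurable (lborel \<Otimes>\<^sub>M lborel)" by measurable
    have "integrable lborel (\<lambda>x. norm (f x) * (\<integral>y. norm (g y) \<partial>lborel))"
      using f by (intro integrable_mult_left) auto
    then show "integrable lborel (\<lambda>x. \<integral>y. norm (f (fst (x, y)) * g (snd (x, y))) \<partial>lborel)"
      by (simp add: abs_mult)
    show "AE x in lborel. integrable lborel (\<lambda>y. f (fst (x, y)) * g (snd (x, y)))"
      using g by auto
  qed
qed

lemma prod_rule:
  fixes f g :: "real \<Rightarrow> real"
  assumes f: "integrable lborel f" and g: "integrable lborel g"
  shows "(\<integral>s. indicator {0..x} s * f s \<partial>lborel) * (\<integral>t. indicator {0..x} t * g t \<partial>lborel)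
       = (\<integral>t. indicator {0..x} t * g t * (\<integral>s. indicator {0..t} s * f s \<partial>lborel) \<partial>lborel)
       + (\<integral>s. indicator {0..x} s * f s * (\<integral>t. indicator {0..s} t * g t \<partial>lborel) \<partial>lborel)"
proof -
  have [measurable]: "f \<in> borel_measurable borel" "g \<in> borel_measurable borel"
    using f g by auto
  define k where "k = (\<lambda>s t. indicator {0..x} t * g t * (indicator {0..t} s * f s) :: real)"
  define l where "l = (\<lambda>s t. indicator {0..x} s * f s * (indicator {0..<s} t * g t) :: real)"
  have kl: "k s t + l s t = indicator {0..x} s * f s * (indicator {0..x} t * g t)" for s t
    by (auto simp: k_def l_def indicator_def)
  have P: "integrable (lborel \<Otimes>\<^sub>M lborel) (\<lambda>p. f (fst p) * g (snd p))"
    by (rule prod_integrable[OF f g])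
  have km: "case_prod k \<in> borel_measurable (lborel \<Otimes>\<^sub>M lborel)"
  proof -
    have "case_prod k = (\<lambda>p. of_bool (0 \<le> snd p \<and> snd p \<le> x) * g (snd p) * (of_bool (0 \<le> fst p \<and> fst p \<le> snd p) * f (fst p)))"
      by (auto simp: k_def indicator_def fun_eq_iff)
    also have "\<dots> \<in> borel_measurable (lborel \<Otimes>\<^sub>M lborel)" by measurable
    finally show ?thesis .
  qed
  have lm: "case_prod l \<in> borel_measurable (lborel \<Otimes>\<^sub>M lborel)"
  proof -
    have "case_prod l = (\<lambda>p. of_bool (0 \<le> fst p \<and> fst p \<le> x) * f (fst p) * (of_bool (0 \<le> snd p \<and> snd p < fst p) * g (snd p)))"
      by (auto simp: l_def indicator_def fun_eq_iff)
    also have "\<dots> \<in> borel_measurable (lborel \<Otimes>\<^sub>M lborel)" by measurable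
    finally show ?thesis .
  qed
  have ki: "integrable (lborel \<Otimes>\<^sub>M lborel) (case_prod k)"
    by (rule Bochner_Integration.integrable_bound[OF P km])
       (auto simp: k_def indicator_def abs_mult)
  have li: "integrable (lborel \<Otimes>\<^sub>M lborel) (case_prod l)"
    by (rule Bochner_Integration.integrable_bound[OF P lm])
       (auto simp: l_def indicator_def abs_mult)
  have "(\<integral>s. indicator {0..x} s * f s \<partial>lborel) * (\<integral>t. indicator {0..x} t * g t \<partial>lborel)
      = (\<integral>s. (\<integral>t. k s t + l s t \<partial>lborel) \<partial>lborel)"
    by (simp add: kl integral_mult_left_zero integral_mult_right_zero flip: integral_mult_left_zero)
  also have "\<dots> = integral\<^sup>L (lborel \<Otimes>\<^sub>M lborel) (\<lambda>(s, t). k s t + l s t)"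
    by (rule lborel_pair.integral_fst) (use ki li in \<open>simp add: split_beta'\<close>)
  also have "\<dots> = integral\<^sup>L (lborel \<Otimes>\<^sub>M lborel) (case_prod k) + integral\<^sup>L (lborel \<Otimes>\<^sub>M lborel) (case_prod l)"
    using ki li by (simp add: split_beta')
  also have "integral\<^sup>L (lborel \<Otimes>\<^sub>M lborel) (case_prod k) = (\<integral>t. (\<integral>s. k s t \<partial>lborel) \<partial>lborel)"
    by (rule lborel_pair.integral_snd[OF ki, symmetric])
  also have "integral\<^sup>L (lborel \<Otimes>\<^sub>M lborel) (case_prod l) = (\<integral>s. (\<integral>t. l s t \<partial>lborel) \<partial>lborel)"
    by (rule lborel_pair.integral_fst[OF li, symmetric])
  also have "(\<lambda>t. (\<integral>s. k s t \<partial>lborel)) = (\<lambda>t. indicator {0..x} t * g t * (\<integral>s. indicator {0..t} s * f s \<partial>lborel))"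
    by (simp add: k_def)
  also have "(\<lambda>s. (\<integral>t. l s t \<partial>lborel)) = (\<lambda>s. indicator {0..x} s * f s * (\<integral>t. indicator {0..s} t * g t \<partial>lborel))"
  proof
    fix s
    have "(\<integral>t. indicator {0..<s} t * g t \<partial>lborel) = (\<integral>t. indicator {0..s} t * g t \<partial>lborel)"
    proof (rule integral_cong_AE)
      show "AE t in lborel. indicator {0..<s} t * g t = indicator {0..s} t * g t"
        using AE_lborel_singleton[of s] by eventually_elim (auto simp: indicator_def)
    qed auto
    then show "(\<integral>t. l s t \<partial>lborel) = indicator {0..x} s * f s * (\<integral>t. indicator {0..s} t * g t \<partial>lborel)"
      by (simp add: l_def)
  qed
  finally show ?thesis .
qed
definition II :: "(real \<Rightarrow> real) \<Rightarrow> real \<Rightarrow> real" where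
  "II a x = (\<integral>s. indicator {0..x} s * a s \<partial>lborel)"

lemma II_facts:
  fixes a :: "real \<Rightarrow> real"
  assumes a: "integrable lborel a"
  shows "continuous_on UNIV (II a)" "II a \<in> borel_measurable borel"
    "\<bar>II a x\<bar> \<le> (\<integral>s. \<bar>a s\<bar> \<partial>lborel)"
proof -
  have "continuous_on UNIV (\<lambda>b. LBINT x:{0..b}. a x)"
    by (rule continuous_on_LBINT) (use a integrable_mult_indicator[of _ lborel a] in \<open>auto simp: set_integrable_def\<close>)
  then show c: "continuous_on UNIV (II a)"
    by (simp add: II_def set_lebesgue_integral_def)
  then show "II a \<in> borel_measurable borel" by (rule borel_measurable_continuous_onI)
  have "\<bar>II a x\<bar> \<le> (\<integral>s. \<bar>indicator {0..x} s * a s\<bar> \<partial>lborel)"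
    unfolding II_def by (rule integral_abs_bound)
  also have "\<dots> \<le> (\<integral>s. \<bar>a s\<bar> \<partial>lborel)"
    by (rule integral_mono) (use a integrable_mult_indicator[of "{0..x}" lborel a] in \<open>auto simp: indicator_def\<close>)
  finally show "\<bar>II a x\<bar> \<le> (\<integral>s. \<bar>a s\<bar> \<partial>lborel)" .
qed

lemma II_pow:
  fixes a :: "real \<Rightarrow> real"
  assumes a: "integrable lborel a"
  shows "II a x ^ Suc n = real (Suc n) * II (\<lambda>t. a t * II a t ^ n) x"
proof (induction n arbitrary: x)
  case 0
  then show ?case by (simp add: II_def)
next
  case (Suc n)
  have [measurable]: "a \<in> borel_measurable borel" "II a \<in> borel_measurable borel"
    using a II_facts[OF a] by auto
  define C where "C = (\<integral>s. \<bar>a s\<bar> \<partial>lborel)"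
  have C: "\<bar>II a t\<bar> \<le> C" for t using II_facts[OF a] by (simp add: C_def)
  have C0: "0 \<le> C" by (simp add: C_def)
  define g where "g = (\<lambda>t. real (Suc n) * (a t * II a t ^ n))"
  have gi: "integrable lborel g"
  proof (rule Bochner_Integration.integrable_bound)
    show "integrable lborel (\<lambda>t. real (Suc n) * (\<bar>a t\<bar> * C ^ n))"
      using a by auto
    show "g \<in> borel_measurable lborel" unfolding g_def by measurable
    show "AE t in lborel. norm (g t) \<le> norm (real (Suc n) * (\<bar>a t\<bar> * C ^ n))"
    proof (rule AE_I2)
      fix t
      have "\<bar>II a t\<bar> ^ n \<le> C ^ n" by (rule power_mono[OF C]) simp
      then show "norm (g t) \<le> norm (real (Suc n) * (\<bar>a t\<bar> * C ^ n))"
        using C0 by (auto simp: g_def abs_mult power_abs intro!: mult_left_mono)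
    qed
  qed
  have G: "II g s = II a s ^ Suc n" for s
  proof -
    have "II g s = (\<integral>t. real (Suc n) * (indicator {0..s} t * (a t * II a t ^ n)) \<partial>lborel)"
      unfolding II_def g_def by (rule Bochner_Integration.integral_cong) (auto simp: mult_ac)
    also have "\<dots> = real (Suc n) * II (\<lambda>t. a t * II a t ^ n) s"
      unfolding II_def by (rule integral_mult_right_zero)
    finally show ?thesis using Suc.IH[of s] by simp
  qed
  have "II a x ^ Suc (Suc n) = II a x * II g x"
    by (simp add: G)
  also have "\<dots> = (\<integral>t. indicator {0..x} t * g t * II a t \<partial>lborel)
      + (\<integral>s. indicator {0..x} s * a s * II g s \<partial>lborel)"
    using prod_rule[OF a gi, of x] by (simp add: II_def)
  also have "(\<integral>t. indicator {0..x} t * g t * II a t \<partial>lborel)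
      = real (Suc n) * II (\<lambda>t. a t * II a t ^ Suc n) x"
    by (simp add: g_def II_def integral_mult_right_zero mult_ac flip: integral_mult_right_zero)
  also have "(\<integral>s. indicator {0..x} s * a s * II g s \<partial>lborel) = II (\<lambda>t. a t * II a t ^ Suc n) x"
    by (simp only: G) (simp add: II_def mult_ac)
  finally show ?case by (simp add: algebra_simps)
qed
lemma II_exp:
  fixes a :: "real \<Rightarrow> real"
  assumes a: "integrable lborel a"
  shows "exp (c * II a x) - 1 = c * II (\<lambda>t. a t * exp (c * II a t)) x"
proof -
  have [measurable]: "a \<in> borel_measurable borel" "II a \<in> borel_measurable borel"
    using a II_facts[OF a] by auto
  define C where "C = (\<integral>s. \<bar>a s\<bar> \<partial>lborel)"
  have C: "\<bar>II a t\<bar> \<le> C" for t using II_facts[OF a] by (simp add: C_def)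
  have C0: "0 \<le> C" by (simp add: C_def)
  define f where "f n t = indicator {0..x} t * (a t * ((c * II a t) ^ n / fact n))" for n t
  have fb: "norm (f n t) \<le> \<bar>a t\<bar> * ((\<bar>c\<bar> * C) ^ n / fact n)" for n t
  proof -
    have "\<bar>c * II a t\<bar> ^ n \<le> (\<bar>c\<bar> * C) ^ n"
      by (rule power_mono) (auto simp: abs_mult intro: mult_left_mono C)
    then have "\<bar>(c * II a t) ^ n / fact n\<bar> \<le> (\<bar>c\<bar> * C) ^ n / fact n"
      by (simp add: power_abs divide_right_mono)
    have "norm (f n t) \<le> \<bar>a t\<bar> * \<bar>(c * II a t) ^ n / fact n\<bar>"
      by (auto simp: f_def abs_mult indicator_def)
    also have "\<dots> \<le> \<bar>a t\<bar> * ((\<bar>c\<bar> * C) ^ n / fact n)"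
      by (rule mult_left_mono) (fact, simp)
    finally show ?thesis .
  qed
  have fi: "integrable lborel (f n)" for n
  proof (rule Bochner_Integration.integrable_bound)
    show "integrable lborel (\<lambda>t. \<bar>a t\<bar> * ((\<bar>c\<bar> * C) ^ n / fact n))" using a by auto
    show "f n \<in> borel_measurable lborel" unfolding f_def by measurable
    show "AE t in lborel. norm (f n t) \<le> norm (\<bar>a t\<bar> * ((\<bar>c\<bar> * C) ^ n / fact n))"
      using fb C0 by (intro AE_I2) (simp add: abs_mult)
  qed
  have sm: "summable (\<lambda>n. norm (f n t))" for t
  proof (rule summable_comparison_test')
    show "summable (\<lambda>n. \<bar>a t\<bar> * ((\<bar>c\<bar> * C) ^ n / fact n))"
      using exp_converges[of "\<bar>c\<bar> * C"] by (intro summable_mult) (simp add: sums_iff divide_inverse mult.commute)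
    show "norm (norm (f n t)) \<le> \<bar>a t\<bar> * ((\<bar>c\<bar> * C) ^ n / fact n)" for n using fb by simp
  qed
  have si: "summable (\<lambda>n. \<integral>t. norm (f n t) \<partial>lborel)"
  proof (rule summable_comparison_test')
    show "summable (\<lambda>n. C * ((\<bar>c\<bar> * C) ^ n / fact n))"
      using exp_converges[of "\<bar>c\<bar> * C"] by (intro summable_mult) (simp add: sums_iff divide_inverse mult.commute)
    show "norm (\<integral>t. norm (f n t) \<partial>lborel) \<le> C * ((\<bar>c\<bar> * C) ^ n / fact n)" for n
    proof -
      have "(\<integral>t. norm (f n t) \<partial>lborel) \<le> (\<integral>t. \<bar>a t\<bar> * ((\<bar>c\<bar> * C) ^ n / fact n) \<partial>lborel)"
        by (rule integral_mono) (use fi a fb in auto)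
      also have "\<dots> = C * ((\<bar>c\<bar> * C) ^ n / fact n)" by (simp add: C_def)
      finally show ?thesis by simp
    qed
  qed
  have S: "(\<lambda>n. integral\<^sup>L lborel (f n)) sums (\<integral>t. (\<Sum>n. f n t) \<partial>lborel)"
    by (rule sums_integral[OF fi _ si]) (use sm in auto)
  have "(\<Sum>n. f n t) = indicator {0..x} t * (a t * exp (c * II a t))" for t
  proof -
    have "(\<lambda>n. (c * II a t) ^ n / fact n) sums exp (c * II a t)"
      using exp_converges[of "c * II a t"] by (simp add: divide_inverse mult.commute)
    then have "(\<lambda>n. f n t) sums (indicator {0..x} t * (a t * exp (c * II a t)))"
      unfolding f_def by (intro sums_mult)
    then show ?thesis by (rule sums_unique[symmetric])
  qed
  then have S2: "(\<lambda>n. integral\<^sup>L lborel (f n)) sums II (\<lambda>t. a t * exp (c * II a t)) x"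
    using S by (simp add: II_def)
  have fe: "c * integral\<^sup>L lborel (f n) = (c * II a x) ^ Suc n / fact (Suc n)" for n
  proof -
    have "integral\<^sup>L lborel (f n) = (c ^ n / fact n) * II (\<lambda>t. a t * II a t ^ n) x"
      unfolding f_def II_def
      by (subst integral_mult_right_zero[symmetric]) (rule Bochner_Integration.integral_cong, auto simp: power_mult_distrib)
    also have "II (\<lambda>t. a t * II a t ^ n) x = II a x ^ Suc n / real (Suc n)"
      using II_pow[OF a, of x n] by (simp add: field_simps)
    finally show ?thesis by (simp add: power_mult_distrib field_simps)
  qed
  have "(\<lambda>n. (c * II a x) ^ Suc n / fact (Suc n)) sums (exp (c * II a x) - 1)"
  proof -
    have "(\<lambda>n. (c * II a x) ^ n / fact n) sums exp (c * II a x)"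
      using exp_converges[of "c * II a x"] by (simp add: divide_inverse mult.commute)
    then show ?thesis by (subst sums_Suc_iff) simp
  qed
  moreover have "(\<lambda>n. c * integral\<^sup>L lborel (f n)) sums (c * II (\<lambda>t. a t * exp (c * II a t)) x)"
    by (rule sums_mult[OF S2])
  ultimately show ?thesis using fe sums_unique2 by simp
qed

lemma II_cmult: "II (\<lambda>s. c * f s) x = c * II f x"
proof -
  have "II (\<lambda>s. c * f s) x = (\<integral>s. c * (indicator {0..x} s * f s) \<partial>lborel)"
    unfolding II_def by (rule Bochner_Integration.integral_cong) (auto simp: mult_ac)
  also have "\<dots> = c * II f x" unfolding II_def by (rule integral_mult_right_zero)
  finally show ?thesis .
qed

lemma II_zero: "II f 0 = 0"
proof -
  show ?thesis
    unfolding II_def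
  proof (rule integral_eq_zero_AE)
    show "AE s in lborel. indicator {0..0} s * f s = (0::real)"
      using AE_lborel_singleton[of 0] by eventually_elim (auto simp: indicator_def)
  qed
qed

theorem mainTheorem5:
  fixes u0 :: "real \<Rightarrow> real"
  assumes "in_L2_01 u0"
  defines "v0 \<equiv> cole_hopf u0"
  shows "(\<forall>x\<in>{0..1}. \<bar>v0 x\<bar> \<le> exp (L2norm01 u0))
       \<and> (\<exists>g. in_L2_01 g
              \<and> (\<forall>x\<in>{0..1}. v0 x = v0 0 + (LINT s:{0..x}|lebesgue. g s))
              \<and> L2norm01 g \<le> 1/2 * exp (L2norm01 u0) * L2norm01 u0)"
proof -
  have um[measurable]: "(\<lambda>x. indicator {0..1} x * u0 x) \<in> borel_measurable lebesgue"
    using assms(1) by (simp add: in_L2_01_def set_borel_measurable_def)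
  have usq: "integrable lebesgue (\<lambda>x. indicator {0..1} x * (u0 x)\<^sup>2)"
    using assms(1) by (simp add: in_L2_01_def set_integrable_def)
  obtain b where bm: "b \<in> borel_measurable lborel"
    and bae: "AE x in lborel. indicator {0..1} x * u0 x = b x"
    using completion_ex_borel_measurable_real[OF um] by blast
  define a where "a = (\<lambda>x. indicator {0..1} x * b x :: real)"
  have am[measurable]: "a \<in> borel_measurable borel" using bm by (simp add: a_def)
  have aae: "AE x in lebesgue. indicator {0..1} x * u0 x = a x"
    by (rule AE_completion) (use bae in \<open>eventually_elim, auto simp: a_def indicator_def of_bool_def split: if_splits\<close>)
  have conv: "(LINT s:{0..x}|lebesgue. (u0 s) ^ Suc k * h s) = II (\<lambda>s. (a s) ^ Suc k * h s) x"
    if x: "x \<le> 1" and hm: "h \<in> borel_measurable borel" for x k h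
  proof -
    have hmb[measurable]: "h \<in> borel_measurable borel" using hm .
    have hm'[measurable]: "h \<in> borel_measurable lebesgue"
      using hm by (intro measurable_completion) simp
    have am'[measurable]: "a \<in> borel_measurable lebesgue"
      by (intro measurable_completion) simp
    have im: "(indicator {0..x} :: real \<Rightarrow> real) \<in> borel_measurable lebesgue"
      by (intro measurable_completion) measurable
    have eq: "indicator {0..x} s *\<^sub>R ((u0 s) ^ Suc k * h s) = indicator {0..x} s * (indicator {0..1} s * u0 s) ^ Suc k * h s" for s
      using x by (auto simp: indicator_def)
    have "(LINT s:{0..x}|lebesgue. (u0 s) ^ Suc k * h s)
        = integral\<^sup>L lebesgue (\<lambda>s. indicator {0..x} s * (indicator {0..1} s * u0 s) ^ Suc k * h s)"
      unfolding set_lebesgue_integral_def eq ..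
    also have "\<dots> = integral\<^sup>L lebesgue (\<lambda>s. indicator {0..x} s * (a s) ^ Suc k * h s)"
    proof (rule integral_cong_AE)
      show "AE s in lebesgue. indicator {0..x} s * (indicator {0..1} s * u0 s) ^ Suc k * h s = indicator {0..x} s * (a s) ^ Suc k * h s"
        using aae by eventually_elim simp
    qed (rule borel_measurable_times[OF borel_measurable_times[OF im borel_measurable_power[OF um]] hm'],
         rule borel_measurable_times[OF borel_measurable_times[OF im borel_measurable_power[OF am']] hm'])
    also have "\<dots> = integral\<^sup>L lborel (\<lambda>s. indicator {0..x} s * (a s) ^ Suc k * h s)"
      by (rule integral_completion) measurable
    finally show ?thesis by (simp add: II_def mult_ac)
  qed

  have im01: "(indicator {0..1} :: real \<Rightarrow> real) \<in> borel_measurable lebesgue"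
    by (intro measurable_completion) measurable
  have am'[measurable]: "a \<in> borel_measurable lebesgue"
    by (intro measurable_completion) simp
  define Q where "Q = (LINT s:{0..1}|lebesgue. (u0 s)\<^sup>2)"
  define N where "N = sqrt Q"
  have NL: "L2norm01 u0 = N" by (simp add: N_def Q_def L2norm01_def)
  have Q0: "0 \<le> Q" unfolding Q_def set_lebesgue_integral_def
    by (rule Bochner_Integration.integral_nonneg) (simp add: indicator_def)
  have QN: "Q = N\<^sup>2" using Q0 by (simp add: N_def)
  have N0: "0 \<le> N" by (simp add: N_def Q0)
  have QII: "Q = II (\<lambda>s. (a s)\<^sup>2) 1"
    using conv[where x=1 and k=1 and h="\<lambda>_. 1"] by (simp add: Q_def power2_eq_square)
  have usq_m: "(\<lambda>x. indicator {0..1} x * (u0 x)\<^sup>2) \<in> borel_measurable lebesgue"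
    using usq by (rule borel_measurable_integrable)
  have a2i: "integrable lborel (\<lambda>s. indicator {0..1} s * (a s)\<^sup>2)"
  proof -
    have "integrable lebesgue (\<lambda>s. indicator {0..1} s * (a s)\<^sup>2)"
    proof (rule integrable_cong_AE[THEN iffD1, OF _ _ _ usq])
      show "(\<lambda>x. indicator {0..1} x * (u0 x)\<^sup>2) \<in> borel_measurable lebesgue" by (fact usq_m)
      show "(\<lambda>s. indicator {0..1} s * (a s)\<^sup>2) \<in> borel_measurable lebesgue"
        by (rule borel_measurable_times[OF im01]) measurable
      show "AE x in lebesgue. indicator {0..1} x * (u0 x)\<^sup>2 = indicator {0..1} x * (a x)\<^sup>2"
        using aae by eventually_elim (auto simp: indicator_def power2_eq_square)
    qed
    then show ?thesis by (subst integrable_completion[symmetric]) measurable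
  qed
  have Q2: "Q = (\<integral>s. indicator {0..1} s * (a s)\<^sup>2 \<partial>lborel)"
    by (simp add: QII II_def)
  have i01: "integrable lborel (indicator {0..1} :: real \<Rightarrow> real)"
    by (rule integrable_real_indicator) auto
  have ai: "integrable lborel a"
  proof (rule Bochner_Integration.integrable_bound)
    show "integrable lborel (\<lambda>s. indicator {0..1} s + indicator {0..1} s * (a s)\<^sup>2 :: real)"
      using i01 a2i by (rule Bochner_Integration.integrable_add)
    show "a \<in> borel_measurable lborel" by simp
    show "AE x in lborel. norm (a x) \<le> norm (indicator {0..1} x + indicator {0..1} x * (a x)\<^sup>2 :: real)"
    proof (rule AE_I2)
      fix x
      have "\<bar>b x\<bar> \<le> 1 + (b x)\<^sup>2"
      proof (cases "\<bar>b x\<bar> \<le> 1")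
        case True
        moreover have "0 \<le> (b x)\<^sup>2" by simp
        ultimately show ?thesis by linarith
      next
        case False
        then have "1 * \<bar>b x\<bar> \<le> \<bar>b x\<bar> * \<bar>b x\<bar>"
          by (intro mult_right_mono) auto
        moreover have "\<bar>b x\<bar> * \<bar>b x\<bar> = (b x)\<^sup>2" by (simp add: power2_eq_square)
        ultimately show ?thesis by linarith
      qed
      then show "norm (a x) \<le> norm (indicator {0..1} x + indicator {0..1} x * (a x)\<^sup>2 :: real)"
        by (auto simp: a_def indicator_def)
    qed
  qed
  have intA: "(\<integral>s. \<bar>a s\<bar> \<partial>lborel) \<le> N"
  proof -
    have lam: "(\<integral>s. \<bar>a s\<bar> \<partial>lborel) \<le> (l + Q / l) / 2" if l: "l > 0" for l
    proof -
      have "(\<integral>s. \<bar>a s\<bar> \<partial>lborel) \<le> (\<integral>s. (l * indicator {0..1} s + (indicator {0..1} s * (a s)\<^sup>2) / l) / 2 \<partial>lborel)"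
      proof (rule Bochner_Integration.integral_mono)
        show "integrable lborel (\<lambda>s. \<bar>a s\<bar>)" using ai by auto
        show "integrable lborel (\<lambda>s. (l * indicator {0..1} s + (indicator {0..1} s * (a s)\<^sup>2) / l) / 2)"
          using i01 a2i by auto
        fix s
        have "0 \<le> (\<bar>a s\<bar> - l)\<^sup>2" by simp
        then have "2 * l * \<bar>a s\<bar> \<le> l * l + (a s)\<^sup>2"
          by (simp add: power2_eq_square algebra_simps abs_mult_self_eq)
        then have "\<bar>a s\<bar> \<le> (l + (a s)\<^sup>2 / l) / 2"
          using l by (simp add: field_simps)
        then show "\<bar>a s\<bar> \<le> (l * indicator {0..1} s + (indicator {0..1} s * (a s)\<^sup>2) / l) / 2"
          by (auto simp: a_def indicator_def)
      qed
      also have "\<dots> = (l + Q / l) / 2"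
        using i01 a2i by (simp add: Q2)
      finally show ?thesis .
    qed
    show ?thesis
    proof (cases "Q = 0")
      case True
      show ?thesis
      proof (rule ccontr)
        assume "\<not> ?thesis"
        then have p: "(\<integral>s. \<bar>a s\<bar> \<partial>lborel) > 0" using N0 by simp
        from lam[OF p] True p show False by simp
      qed
    next
      case False
      then have "N > 0" using Q0 N0 by (simp add: N_def)
      from lam[OF this] show ?thesis using QN \<open>N > 0\<close> by (simp add: power2_eq_square)
    qed
  qed
  have UB: "\<bar>II a t\<bar> \<le> N" for t
    using II_facts(3)[OF ai, of t] intA by simp
  have IIm[measurable]: "II a \<in> borel_measurable borel" using II_facts[OF ai] by simp
  define E where "E t = exp (- (1/2) * II a t)" for t
  have Em[measurable]: "E \<in> borel_measurable borel" unfolding E_def by measurable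
  have Eup: "E t \<le> exp (N/2)" for t
    unfolding E_def using UB[of t] by auto
  have Elo: "exp (- N/2) \<le> E t" for t
    unfolding E_def using UB[of t] by auto
  have inner: "(LINT s:{0..y}|lebesgue. u0 s) = II a y" if "y \<le> 1" for y
    using conv[where x=y and k=0 and h="\<lambda>_. 1", OF that] by simp
  define D where "D = (\<integral>y. indicator {0..1} y * E y \<partial>lborel)"
  have Deq: "(LINT y:{0..1}|lebesgue. exp (- (1/2) * (LINT s:{0..y}|lebesgue. u0 s))) = D"
  proof -
    have "(LINT y:{0..1}|lebesgue. exp (- (1/2) * (LINT s:{0..y}|lebesgue. u0 s))) = (LINT y:{0..1}|lebesgue. E y)"
      by (rule set_lebesgue_integral_cong) (auto simp: inner E_def)
    also have "\<dots> = D"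
      unfolding set_lebesgue_integral_def D_def by (simp add: integral_completion)
    finally show ?thesis .
  qed
  have Dlo: "exp (- N/2) \<le> D"
  proof -
    have "(\<integral>y. indicator {0..1} (y::real) * exp (- N/2) \<partial>lborel) \<le> D"
      unfolding D_def
    proof (rule Bochner_Integration.integral_mono)
      show "integrable lborel (\<lambda>y::real. indicator {0..1} y * exp (- N/2))" by (simp add: i01)
      show "integrable lborel (\<lambda>y. indicator {0..1} y * E y)"
      proof (rule Bochner_Integration.integrable_bound)
        show "integrable lborel (\<lambda>y::real. indicator {0..1} y * exp (N/2))" by (simp add: i01)
        show "(\<lambda>y. indicator {0..1} y * E y) \<in> borel_measurable lborel" by measurable
        show "AE y in lborel. norm (indicator {0..1} y * E y) \<le> norm (indicator {0..1} y * exp (N/2))"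
          using Eup by (intro AE_I2) (auto simp: indicator_def abs_of_pos E_def)
      qed
      show "indicator {0..1} y * exp (- N/2) \<le> indicator {0..1} y * E y" for y
        using Elo[of y] by (auto simp: indicator_def)
    qed
    then show ?thesis by simp
  qed
  have Dpos: "D > 0" using Dlo by (rule less_le_trans[rotated]) simp
  have v0eq: "v0 x = E x / D" if "x \<in> {0..1}" for x
    unfolding v0_def cole_hopf_def Deq using that by (simp add: inner E_def)
  have v0b: "\<bar>v0 x\<bar> \<le> exp N" if "x \<in> {0..1}" for x
  proof -
    have "\<bar>v0 x\<bar> = E x / D" using v0eq[OF that] Dpos by (simp add: E_def)
    also have "\<dots> \<le> exp (N/2) / exp (- N/2)"
      by (rule frac_le) (use Eup Dlo in auto)
    also have "\<dots> = exp N" by (simp add: exp_minus field_simps flip: exp_add)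
    finally show ?thesis .
  qed
  define g where "g = (\<lambda>s. - (1/2) * u0 s * v0 s)"
  have Em'[measurable]: "E \<in> borel_measurable lebesgue"
    by (intro measurable_completion) simp
  have Epos: "0 < E t" for t by (simp add: E_def)
  have gpt: "indicator {0..1} s * g s = (indicator {0..1} s * u0 s) * (- (1/2) * E s / D)" for s
    by (cases "s \<in> {0..1}") (auto simp: g_def v0eq)
  have g2pt: "indicator {0..1} s *\<^sub>R (g s)\<^sup>2 = (1/4 * (E s / D)\<^sup>2) * (indicator {0..1} s * (u0 s)\<^sup>2)" for s
    by (cases "s \<in> {0..1}") (auto simp: g_def v0eq power2_eq_square)
  have EDb: "(E s / D)\<^sup>2 \<le> (exp N)\<^sup>2" for s
  proof -
    have "E s / D \<le> exp N"
    proof -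
      have "E s / D \<le> exp (N/2) / exp (- N/2)"
        by (rule frac_le) (use Eup Dlo Epos[of s] in auto)
      also have "\<dots> = exp N" by (simp add: exp_minus field_simps flip: exp_add)
      finally show ?thesis .
    qed
    moreover have "0 \<le> E s / D" using Epos[of s] Dpos by simp
    ultimately show ?thesis by (rule power_mono)
  qed
  have g2m: "(\<lambda>s. (1/4 * (E s / D)\<^sup>2) * (indicator {0..1} s * (u0 s)\<^sup>2)) \<in> borel_measurable lebesgue"
    by (rule borel_measurable_times[OF _ usq_m]) measurable
  have g2i: "integrable lebesgue (\<lambda>s. (1/4 * (E s / D)\<^sup>2) * (indicator {0..1} s * (u0 s)\<^sup>2))"
  proof (rule Bochner_Integration.integrable_bound)
    show "integrable lebesgue (\<lambda>s. (1/4 * (exp N)\<^sup>2) * (indicator {0..1} s * (u0 s)\<^sup>2))"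
      using usq by (rule integrable_mult_right)
    show "AE s in lebesgue. norm ((1/4 * (E s / D)\<^sup>2) * (indicator {0..1} s * (u0 s)\<^sup>2))
        \<le> norm ((1/4 * (exp N)\<^sup>2) * (indicator {0..1} s * (u0 s)\<^sup>2))"
    proof (rule AE_I2)
      fix s
      have "(1/4 * (E s / D)\<^sup>2) * (indicator {0..1} s * (u0 s)\<^sup>2) \<le> (1/4 * (exp N)\<^sup>2) * (indicator {0..1} s * (u0 s)\<^sup>2)"
        by (rule mult_right_mono) (use EDb[of s] in auto)
      then show "norm ((1/4 * (E s / D)\<^sup>2) * (indicator {0..1} s * (u0 s)\<^sup>2))
        \<le> norm ((1/4 * (exp N)\<^sup>2) * (indicator {0..1} s * (u0 s)\<^sup>2))"
        by (simp add: abs_mult)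
    qed
  qed (fact g2m)
  have gL2: "in_L2_01 g"
    unfolding in_L2_01_def set_borel_measurable_def set_integrable_def
  proof
    have "(\<lambda>s. indicator {0..1} s *\<^sub>R g s) = (\<lambda>s. (indicator {0..1} s * u0 s) * (- (1/2) * E s / D))"
      using gpt by auto
    also have "\<dots> \<in> borel_measurable lebesgue"
      by (rule borel_measurable_times[OF um]) measurable
    finally show "(\<lambda>s. indicator {0..1} s *\<^sub>R g s) \<in> borel_measurable lebesgue" .
    show "integrable lebesgue (\<lambda>s. indicator {0..1} s *\<^sub>R (g s)\<^sup>2)"
      unfolding g2pt by (fact g2i)
  qed
  have gnorm: "L2norm01 g \<le> 1/2 * exp N * N"
  proof -
    have "(LINT s:{0..1}|lebesgue. (g s)\<^sup>2) = integral\<^sup>L lebesgue (\<lambda>s. (1/4 * (E s / D)\<^sup>2) * (indicator {0..1} s * (u0 s)\<^sup>2))"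
      unfolding set_lebesgue_integral_def g2pt ..
    also have "\<dots> \<le> integral\<^sup>L lebesgue (\<lambda>s. (1/4 * (exp N)\<^sup>2) * (indicator {0..1} s * (u0 s)\<^sup>2))"
    proof (rule Bochner_Integration.integral_mono)
      show "integrable lebesgue (\<lambda>s. (1/4 * (exp N)\<^sup>2) * (indicator {0..1} s * (u0 s)\<^sup>2))"
        using usq by (rule integrable_mult_right)
      fix s
      show "(1/4 * (E s / D)\<^sup>2) * (indicator {0..1} s * (u0 s)\<^sup>2) \<le> (1/4 * (exp N)\<^sup>2) * (indicator {0..1} s * (u0 s)\<^sup>2)"
        by (rule mult_right_mono) (use EDb[of s] in auto)
    qed (fact g2i)
    also have "\<dots> = (1/4 * (exp N)\<^sup>2) * Q"
      by (simp add: Q_def set_lebesgue_integral_def)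
    also have "\<dots> = (1/2 * exp N * N)\<^sup>2"
      by (simp add: QN power2_eq_square)
    finally have "sqrt (LINT s:{0..1}|lebesgue. (g s)\<^sup>2) \<le> sqrt ((1/2 * exp N * N)\<^sup>2)"
      by (rule real_sqrt_le_mono)
    also have "\<dots> = 1/2 * exp N * N" using N0 by simp
    finally show ?thesis by (simp add: L2norm01_def)
  qed
  have gid: "v0 x = v0 0 + (LINT s:{0..x}|lebesgue. g s)" if x: "x \<in> {0..1}" for x
  proof -
    have "(LINT s:{0..x}|lebesgue. g s) = (LINT s:{0..x}|lebesgue. (u0 s) ^ Suc 0 * (- (1/2) / D * E s))"
      by (rule set_lebesgue_integral_cong) (use x in \<open>auto simp: g_def v0eq\<close>)
    also have "\<dots> = II (\<lambda>s. (a s) ^ Suc 0 * (- (1/2) / D * E s)) x"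
      by (rule conv) (use x in auto)
    also have "\<dots> = (- (1/2) / D) * II (\<lambda>s. a s * E s) x"
      by (subst II_cmult[symmetric]) (simp add: mult_ac)
    finally have c1: "(LINT s:{0..x}|lebesgue. g s) = (- (1/2) / D) * II (\<lambda>s. a s * E s) x" .
    have c2: "- (1/2) * II (\<lambda>s. a s * E s) x = E x - 1"
      using II_exp[OF ai, of "- (1/2)" x] by (simp add: E_def)
    have "(LINT s:{0..x}|lebesgue. g s) = (E x - 1) / D"
      unfolding c1 c2[symmetric] by (simp add: field_simps)
    moreover have "v0 0 = 1 / D" using v0eq[of 0] by (simp add: E_def II_zero)
    ultimately show ?thesis using v0eq[OF x] by (simp add: diff_divide_distrib)
  qed
  show ?thesis
    unfolding NL using v0b gL2 gid gnorm by blast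
qed

end
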